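(* Let $n\geq 4$ and let $\pi\in S(\mathbb{Z}_n)$ satisfy $t([\pi])=n-2$. Then $\pi$ is a strong complete mapping, i.e. both $x\mapsto \pi(x)-x$ and $x\mapsto \pi(x)+x$ are permutations of $\mathbb{Z}_n$.
   Context: $S(\mathbb{Z}_n)$ is the set of bijections $\mathbb{Z}_n\to\mathbb{Z}_n$. For $\pi\in S(\mathbb{Z}_n)$, $\mathrm{cyc}(\pi)$ is the number of cycles (including fixed points) of $\pi$, $t(\pi)=n-\mathrm{cyc}(\pi)$, $[\pi]=\{x\mapsto \pi(x+b): b\in\mathbb{Z}_n\}$ and $t([\pi])=\min_{\sigma\in[\pi]}t(\sigma)$. *)

theory Defs
  imports "HOL-Combinatorics.Combinatorics"
begin

(* Z_n is modelled by {..<n} :: nat set with arithmetic mod n.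
   A bijection Z_n -> Z_n is a function p with  p permutes {..<n}
   (identity outside {..<n}). *)

(* number of cycles (fixed points included) of p on Z_n = number of distinct orbits *)
definition cyc :: "nat \<Rightarrow> (nat \<Rightarrow> nat) \<Rightarrow> nat" where
  "cyc n p = card ((\<lambda>x. orbit p x) ` {..<n})"

definition tr :: "nat \<Rightarrow> (nat \<Rightarrow> nat) \<Rightarrow> nat" where
  "tr n p = n - cyc n p"

definition shiftp :: "nat \<Rightarrow> (nat \<Rightarrow> nat) \<Rightarrow> nat \<Rightarrow> (nat \<Rightarrow> nat)" where
  "shiftp n p b = (\<lambda>x. if x < n then p ((x + b) mod n) else x)"

(* t([p]) = min over the class [p] = {x \<mapsto> p(x+b) : b \<in> Z_n} *)
definition tr_class :: "nat \<Rightarrow> (nat \<Rightarrow> nat) \<Rightarrow> nat" where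
  "tr_class n p = Min ((\<lambda>b. tr n (shiftp n p b)) ` {..<n})"

end

theory Submission
  imports Defs
begin

lemma modeq_dvd: "0 < (n::nat) \<Longrightarrow> (a mod n = b mod n) \<longleftrightarrow> int n dvd (int a - int b)"
  by (metis mod_eq_dvd_iff of_nat_eq_iff zmod_int)

lemma modI: assumes "c < (n::nat)" "int n dvd (int a - int c)" shows "a mod n = c"
proof -
  have "a mod n = c mod n" using assms modeq_dvd[of n a c] by simp
  thus ?thesis using assms(1) by simp
qed

lemma orbit_two: assumes "q x = y" "q y = x" shows "orbit q x \<subseteq> {x, y}"
proof
  fix z assume "z \<in> orbit q x" then show "z \<in> {x,y}"
    by induction (use assms in auto)
qed

lemma cyc_ge3:
  assumes "a < n" "c < n" "d < n" "orbit q a \<noteq> orbit q c" "orbit q a \<noteq> orbit q d"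
    "orbit q c \<noteq> orbit q d"
  shows "cyc n q \<ge> 3"
proof -
  have "{orbit q a, orbit q c, orbit q d} \<subseteq> (\<lambda>x. orbit q x) ` {..<n}" using assms by auto
  moreover have "card {orbit q a, orbit q c, orbit q d} = 3" using assms by simp
  ultimately show ?thesis unfolding cyc_def
    by (metis card_mono finite_imageI finite_lessThan)
qed

lemma shift_inj:
  assumes "p permutes {..<n}" "x < n" "y < n" "shiftp n p b x = shiftp n p b y"
  shows "x = y"
proof -
  have "n > 0" using assms by auto
  have "p ((x + b) mod n) = p ((y + b) mod n)" using assms(2-4) by (simp add: shiftp_def)
  hence "(x + b) mod n = (y + b) mod n" using permutes_inj[OF assms(1)] by (meson injD)
  hence "int n dvd (int x - int y)" using modeq_dvd[OF \<open>n>0\<close>] by simp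
  hence "x mod n = y mod n" using modeq_dvd[OF \<open>n>0\<close>] by simp
  thus ?thesis using assms by simp
qed

lemma shift_lt: assumes "p permutes {..<n}" "x < n" shows "shiftp n p b x < n"
proof -
  have "n > 0" using assms by auto
  hence "(x + b) mod n < n" by simp
  thus ?thesis using assms permutes_in_image[OF assms(1)] by (simp add: shiftp_def)
qed

lemma two_fix:
  assumes "p permutes {..<n}" "n \<ge> 3" "x < n" "y < n" "x \<noteq> y"
    "shiftp n p b x = x" "shiftp n p b y = y"
  shows "cyc n (shiftp n p b) \<ge> 3"
proof -
  let ?q = "shiftp n p b"
  have "{..<n} - {x,y} \<noteq> {}"
  proof
    assume "{..<n} - {x,y} = {}"
    hence "{..<n} \<subseteq> {x,y}" by auto
    hence "card {..<n} \<le> card {x,y}" by (meson card_mono finite.emptyI finite.insertI)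
    thus False using assms by (simp add: card_insert_if)
  qed
  then obtain u where u: "u < n" "u \<noteq> x" "u \<noteq> y" by auto
  have ox: "orbit ?q x = {x}" "orbit ?q y = {y}" using assms orbit_eq_singleton_iff by metis+
  have "?q u \<in> orbit ?q u" by (rule orbit.base)
  moreover have "?q u \<noteq> x" using shift_inj[OF assms(1) u(1) assms(3)] assms u by metis
  moreover have "?q u \<noteq> y" using shift_inj[OF assms(1) u(1) assms(4)] assms u by metis
  ultimately have "orbit ?q u \<noteq> orbit ?q x" "orbit ?q u \<noteq> orbit ?q y" using ox by auto
  moreover have "orbit ?q x \<noteq> orbit ?q y" using ox assms by auto
  ultimately show ?thesis using cyc_ge3[OF assms(3,4) u(1)] by metis
qed

lemma fix_two:
  assumes "p permutes {..<n}" "n \<ge> 4" "f < n" "x < n" "y < n" "x \<noteq> y"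
    "shiftp n p b f = f" "shiftp n p b x = y" "shiftp n p b y = x"
  shows "cyc n (shiftp n p b) \<ge> 3"
proof -
  let ?q = "shiftp n p b"
  have fx: "f \<noteq> x" "f \<noteq> y" using assms by metis+
  have "{..<n} - {f,x,y} \<noteq> {}"
  proof
    assume "{..<n} - {f,x,y} = {}"
    hence "{..<n} \<subseteq> {f,x,y}" by auto
    hence "card {..<n} \<le> card {f,x,y}" by (meson card_mono finite.emptyI finite.insertI)
    moreover have "card {f,x,y} \<le> 3" by (simp add: card_insert_if)
    ultimately show False using assms by simp
  qed
  then obtain u where u: "u < n" "u \<noteq> f" "u \<noteq> x" "u \<noteq> y" by auto
  have of: "orbit ?q f = {f}" using assms orbit_eq_singleton_iff by metis
  have ox: "orbit ?q x \<subseteq> {x,y}" "y \<in> orbit ?q x" using orbit_two[of ?q x y] assms orbit.base[of ?q x] by auto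
  have "?q u \<in> orbit ?q u" by (rule orbit.base)
  moreover have "?q u \<noteq> f" using shift_inj[OF assms(1) u(1) assms(3)] assms u by metis
  moreover have "?q u \<noteq> x" using shift_inj[OF assms(1) u(1) assms(5)] assms u by metis
  moreover have "?q u \<noteq> y" using shift_inj[OF assms(1) u(1) assms(4)] assms u by metis
  ultimately have "orbit ?q u \<noteq> orbit ?q f" "orbit ?q u \<noteq> orbit ?q x" using of ox by auto
  moreover have "orbit ?q f \<noteq> orbit ?q x" using of ox fx by auto
  ultimately show ?thesis using cyc_ge3[OF assms(3,4) u(1)] by metis
qed

theorem proposition2p6:
  fixes n :: nat and p :: "nat \<Rightarrow> nat"
  assumes "n \<ge> 4"
    and "p permutes {..<n}"
    and "tr_class n p = n - 2"
  shows "bij_betw (\<lambda>x. (p x + n - x) mod n) {..<n} {..<n}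
       \<and> bij_betw (\<lambda>x. (p x + x) mod n) {..<n} {..<n}"
proof -
  have n0: "n > 0" using assms by simp
  have pl: "\<And>x. x < n \<Longrightarrow> p x < n" using permutes_in_image[OF assms(2)] by simp
  have pinj: "\<And>x y. p x = p y \<Longrightarrow> x = y" using permutes_inj[OF assms(2)] by (meson injD)
  have cyc2: "cyc n (shiftp n p b) \<le> 2" if "b < n" for b
  proof -
    have "tr_class n p \<le> tr n (shiftp n p b)" unfolding tr_class_def
      using that by (intro Min_le) auto
    thus ?thesis using assms unfolding tr_def by simp
  qed
  have sh: "shiftp n p b x = p ((x + b) mod n)" if "x < n" for x b
    using that by (simp add: shiftp_def)
  let ?g = "\<lambda>x. (p x + n - x) mod n"
  let ?h = "\<lambda>x. (p x + x) mod n"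
  have ginj: "inj_on ?g {..<n}"
  proof (rule inj_onI, rule ccontr)
    fix z w assume z: "z \<in> {..<n}" and w: "w \<in> {..<n}" and e: "?g z = ?g w" and ne: "z \<noteq> w"
    define b where "b = (z + n - p z) mod n"
    have zl: "z < n" "w < n" "p z < n" "p w < n" using z w pl by auto
    have d: "int n dvd (int (p z + n - z) - int (p w + n - w))" using e modeq_dvd[OF n0] by simp
    have db: "int n dvd (int b - int (z + n - p z))" unfolding b_def
      using modeq_dvd[OF n0] by (metis mod_mod_trivial)
    have "int n dvd (int (p z) + int b - int z)"
    proof -
      have "int (p z) + int b - int z = (int b - int (z + n - p z)) + int n"
        using zl by (simp add: of_nat_diff)
      thus ?thesis using db by (metis dvd_add dvd_refl)
    qed
    hence "(p z + b) mod n = z" using zl by (intro modI) auto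
    hence f1: "shiftp n p b (p z) = p z" using sh zl by simp
    have "int n dvd (int (p w) + int b - int w)"
    proof -
      have "int (p w) + int b - int w = (int b - int (z + n - p z)) - (int (p z + n - z) - int (p w + n - w)) + int n"
        using zl by (simp add: of_nat_diff)
      thus ?thesis using d db by (metis dvd_add dvd_diff dvd_refl)
    qed
    hence "(p w + b) mod n = w" using zl by (intro modI) auto
    hence f2: "shiftp n p b (p w) = p w" using sh zl by simp
    have "p z \<noteq> p w" using ne pinj by metis
    hence "cyc n (shiftp n p b) \<ge> 3" using two_fix[OF assms(2) _ zl(3,4) _ f1 f2] assms by simp
    moreover have "b < n" unfolding b_def using n0 by simp
    ultimately show False using cyc2 by fastforce
  qed
  have gim: "?g ` {..<n} = {..<n}"
    by (rule endo_inj_surj) (use ginj n0 in auto)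
  have hinj: "inj_on ?h {..<n}"
  proof (rule inj_onI, rule ccontr)
    fix z w assume z: "z \<in> {..<n}" and w: "w \<in> {..<n}" and e: "?h z = ?h w" and ne: "z \<noteq> w"
    define b where "b = (z + n - p w) mod n"
    have zl: "z < n" "w < n" "p z < n" "p w < n" using z w pl by auto
    have d: "int n dvd (int (p z + z) - int (p w + w))" using e modeq_dvd[OF n0] by simp
    have db: "int n dvd (int b - int (z + n - p w))" unfolding b_def
      using modeq_dvd[OF n0] by (metis mod_mod_trivial)
    have "int n dvd (int (p w) + int b - int z)"
    proof -
      have "int (p w) + int b - int z = (int b - int (z + n - p w)) + int n"
        using zl by (simp add: of_nat_diff)
      thus ?thesis using db by (metis dvd_add dvd_refl)
    qed
    hence "(p w + b) mod n = z" using zl by (intro modI) auto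
    hence f1: "shiftp n p b (p w) = p z" using sh zl by simp
    have "int n dvd (int (p z) + int b - int w)"
    proof -
      have "int (p z) + int b - int w = (int b - int (z + n - p w)) + (int (p z + z) - int (p w + w)) + int n"
        using zl by (simp add: of_nat_diff)
      thus ?thesis using d db by (metis dvd_add dvd_diff dvd_refl)
    qed
    hence "(p z + b) mod n = w" using zl by (intro modI) auto
    hence f2: "shiftp n p b (p z) = p w" using sh zl by simp
    have "(n - b) mod n \<in> ?g ` {..<n}" using gim n0 by simp
    then obtain v where v: "v < n" "(p v + n - v) mod n = (n - b) mod n" by auto
    have bl: "b < n" unfolding b_def using n0 by simp
    have pv: "p v < n" using v pl by simp
    have dv: "int n dvd (int (p v + n - v) - int (n - b))" using v modeq_dvd[OF n0] by simp
    have "int n dvd (int (p v) + int b - int v)"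
    proof -
      have "int (p v) + int b - int v = int (p v + n - v) - int (n - b)"
        using v bl by (simp add: of_nat_diff)
      thus ?thesis using dv by metis
    qed
    hence "(p v + b) mod n = v" using v by (intro modI) auto
    hence f3: "shiftp n p b (p v) = p v" using sh pv by simp
    have "p z \<noteq> p w" using ne pinj by metis
    hence "cyc n (shiftp n p b) \<ge> 3"
      using fix_two[OF assms(2) assms(1) pv zl(4,3) _ f3 f1 f2] by simp
    thus False using cyc2 bl by fastforce
  qed
  have him: "?h ` {..<n} = {..<n}"
    by (rule endo_inj_surj) (use hinj n0 in auto)
  show ?thesis using ginj gim hinj him by (simp add: bij_betw_def)
qed

end
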